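(* Let $X$ be a topological space and $x\in X$. The union of all finitely non-Hausdorff subsets of $X$ that contain $x$ (equivalently, of all maximal finitely non-Hausdorff subsets of $X$ that contain $x$) is a closed set in $X$.
   Context: A non-empty subset $A$ of $X$ is finitely non-Hausdorff if for every non-empty finite $F\subseteq A$ and every family $\{U_y:y\in F\}$ of open neighborhoods $U_y$ of $y$, $\bigcap_{y\in F}U_y\neq\emptyset$; it is maximal finitely non-Hausdorff if no finitely non-Hausdorff subset of $X$ properly contains it. *)

theory Defs
  imports "HOL-Analysis.Analysis"
begin

definition finitely_non_hausdorff :: "'a topology \<Rightarrow> 'a set \<Rightarrow> bool" where
  "finitely_non_hausdorff X A \<longleftrightarrow>
     A \<noteq> {} \<and> A \<subseteq> topspace X \<and>
     (\<forall>F U. finite F \<and> F \<noteq> {} \<and> F \<subseteq> A \<and>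
            (\<forall>y\<in>F. openin X (U y) \<and> y \<in> U y) \<longrightarrow> (\<Inter>y\<in>F. U y) \<noteq> {})"

definition maximal_finitely_non_hausdorff :: "'a topology \<Rightarrow> 'a set \<Rightarrow> bool" where
  "maximal_finitely_non_hausdorff X A \<longleftrightarrow>
     finitely_non_hausdorff X A \<and>
     \<not> (\<exists>B. finitely_non_hausdorff X B \<and> A \<subset> B)"

end

theory Submission
  imports Defs
begin

lemma fnh_subset:
  assumes "finitely_non_hausdorff X A" "B \<subseteq> A" "B \<noteq> {}"
  shows "finitely_non_hausdorff X B"
  using assms unfolding finitely_non_hausdorff_def by (metis subset_trans)

lemma fnh_pair:
  assumes "x \<in> topspace X" "z \<in> topspace X"
  shows "finitely_non_hausdorff X {x,z} \<longleftrightarrow>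
    (\<forall>U V. openin X U \<and> x \<in> U \<and> openin X V \<and> z \<in> V \<longrightarrow> U \<inter> V \<noteq> {})"
proof
  assume h: "finitely_non_hausdorff X {x,z}"
  show "\<forall>U V. openin X U \<and> x \<in> U \<and> openin X V \<and> z \<in> V \<longrightarrow> U \<inter> V \<noteq> {}"
  proof (intro allI impI)
    fix U V assume uv: "openin X U \<and> x \<in> U \<and> openin X V \<and> z \<in> V"
    show "U \<inter> V \<noteq> {}"
    proof (cases "x = z")
      case True then show ?thesis using uv by blast
    next
      case False
      define W where "W = (\<lambda>y. if y = x then U else V)"
      have all: "\<forall>F U. finite F \<and> F \<noteq> {} \<and> F \<subseteq> {x,z} \<and>
            (\<forall>y\<in>F. openin X (U y) \<and> y \<in> U y) \<longrightarrow> (\<Inter>y\<in>F. U y) \<noteq> {}"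
        using h unfolding finitely_non_hausdorff_def by simp
      have "\<forall>y\<in>{x,z}. openin X (W y) \<and> y \<in> W y" using uv False by (auto simp: W_def)
      then have "(\<Inter>y\<in>{x,z}. W y) \<noteq> {}"
        using all[rule_format, of "{x,z}" W] by simp
      then show ?thesis using False unfolding W_def by auto
    qed
  qed
next
  assume h: "\<forall>U V. openin X U \<and> x \<in> U \<and> openin X V \<and> z \<in> V \<longrightarrow> U \<inter> V \<noteq> {}"
  show "finitely_non_hausdorff X {x,z}"
    unfolding finitely_non_hausdorff_def
  proof (intro conjI allI impI)
    show "{x,z} \<noteq> {}" by simp
    show "{x,z} \<subseteq> topspace X" using assms by simp
    fix F U
    assume a: "finite F \<and> F \<noteq> {} \<and> F \<subseteq> {x, z} \<and> (\<forall>y\<in>F. openin X (U y) \<and> y \<in> U y)"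
    have "F = {x} \<or> F = {z} \<or> F = {x,z}" using a by blast
    then show "(\<Inter>y\<in>F. U y) \<noteq> {}"
    proof (elim disjE)
      assume "F = {x}" then show ?thesis using a by auto
    next
      assume "F = {z}" then show ?thesis using a by auto
    next
      assume F: "F = {x,z}"
      then have "U x \<inter> U z \<noteq> {}" using a h by auto
      then show ?thesis using F by auto
    qed
  qed
qed

lemma fnh_maximal_exists:
  assumes "finitely_non_hausdorff X A0"
  shows "\<exists>M. maximal_finitely_non_hausdorff X M \<and> A0 \<subseteq> M"
proof -
  let ?A = "{B. finitely_non_hausdorff X B \<and> A0 \<subseteq> B}"
  have "\<exists>M\<in>?A. \<forall>Y\<in>?A. M \<subseteq> Y \<longrightarrow> Y = M"
  proof (rule subset_Zorn_nonempty)
    show "?A \<noteq> {}" using assms by blast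
    fix C assume C: "C \<noteq> {}" "subset.chain ?A C"
    have CA: "C \<subseteq> ?A" using C(2) unfolding subset.chain_def by blast
    have "finitely_non_hausdorff X (\<Union>C)"
      unfolding finitely_non_hausdorff_def
    proof (intro conjI allI impI)
      obtain B0 where B0: "B0 \<in> C" using C(1) by blast
      then have "finitely_non_hausdorff X B0" using CA by blast
      then have "B0 \<noteq> {}" unfolding finitely_non_hausdorff_def by simp
      then show "\<Union>C \<noteq> {}" using B0 by blast
      have "\<And>B. B \<in> C \<Longrightarrow> B \<subseteq> topspace X"
      proof -
        fix B assume "B \<in> C"
        then have "finitely_non_hausdorff X B" using CA by blast
        then show "B \<subseteq> topspace X" unfolding finitely_non_hausdorff_def by simp
      qed
      then show "\<Union>C \<subseteq> topspace X" by blast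
      fix F U
      assume a: "finite F \<and> F \<noteq> {} \<and> F \<subseteq> \<Union>C \<and> (\<forall>y\<in>F. openin X (U y) \<and> y \<in> U y)"
      have "finite F" "F \<subseteq> \<Union>C" using a by auto
      then obtain B where B: "B \<in> C" "F \<subseteq> B"
        using finite_subset_Union_chain[OF _ _ C(1) C(2)] by blast
      then have "finitely_non_hausdorff X B" using CA by blast
      then have "\<forall>F U. finite F \<and> F \<noteq> {} \<and> F \<subseteq> B \<and>
            (\<forall>y\<in>F. openin X (U y) \<and> y \<in> U y) \<longrightarrow> (\<Inter>y\<in>F. U y) \<noteq> {}"
        unfolding finitely_non_hausdorff_def by simp
      then show "(\<Inter>y\<in>F. U y) \<noteq> {}" using a B by blast
    qed
    moreover have "A0 \<subseteq> \<Union>C" using C(1) CA by blast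
    ultimately show "\<Union>C \<in> ?A" by blast
  qed
  then obtain M where M: "M \<in> ?A" "\<forall>Y\<in>?A. M \<subseteq> Y \<longrightarrow> Y = M" by blast
  have "maximal_finitely_non_hausdorff X M"
    unfolding maximal_finitely_non_hausdorff_def
  proof (intro conjI notI)
    show "finitely_non_hausdorff X M" using M by blast
    assume "\<exists>B. finitely_non_hausdorff X B \<and> M \<subset> B"
    then obtain B where "finitely_non_hausdorff X B" "M \<subset> B" by blast
    then show False using M by blast
  qed
  then show ?thesis using M by blast
qed

theorem corollary2p16:
  fixes X :: "'a topology" and x :: 'a
  assumes "x \<in> topspace X"
  shows "closedin X (\<Union>{A. finitely_non_hausdorff X A \<and> x \<in> A})
    \<and> \<Union>{A. finitely_non_hausdorff X A \<and> x \<in> A}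
        = \<Union>{A. maximal_finitely_non_hausdorff X A \<and> x \<in> A}"
proof
  let ?S = "\<Union>{A. finitely_non_hausdorff X A \<and> x \<in> A}"
  let ?F = "{X closure_of U | U. openin X U \<and> x \<in> U}"
  have S: "?S = \<Inter>?F"
  proof (intro equalityI subsetI)
    fix z assume "z \<in> ?S"
    then obtain A where A: "finitely_non_hausdorff X A" "x \<in> A" "z \<in> A" by blast
    have sub: "{x,z} \<subseteq> A" using A by blast
    have p: "finitely_non_hausdorff X {x,z}" using fnh_subset[OF A(1) sub] by simp
    have zt: "z \<in> topspace X" using A(1,3) unfolding finitely_non_hausdorff_def by blast
    have q: "\<forall>U V. openin X U \<and> x \<in> U \<and> openin X V \<and> z \<in> V \<longrightarrow> U \<inter> V \<noteq> {}"
      using p fnh_pair[OF assms zt] by simp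
    show "z \<in> \<Inter>?F"
    proof
      fix C assume "C \<in> ?F"
      then obtain U where U: "C = X closure_of U" "openin X U" "x \<in> U" by blast
      have "\<forall>T. z \<in> T \<and> openin X T \<longrightarrow> (\<exists>y. y \<in> U \<and> y \<in> T)"
      proof (intro allI impI)
        fix T assume "z \<in> T \<and> openin X T"
        then have "U \<inter> T \<noteq> {}" using q U by blast
        then show "\<exists>y. y \<in> U \<and> y \<in> T" by blast
      qed
      then show "z \<in> C" unfolding U(1) in_closure_of using zt by blast
    qed
  next
    fix z assume z: "z \<in> \<Inter>?F"
    have "X closure_of topspace X \<in> ?F" using assms by blast
    then have "z \<in> X closure_of topspace X" using z by blast
    then have zt: "z \<in> topspace X" unfolding in_closure_of by blast
    have "\<forall>U V. openin X U \<and> x \<in> U \<and> openin X V \<and> z \<in> V \<longrightarrow> U \<inter> V \<noteq> {}"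
    proof (intro allI impI)
      fix U V assume uv: "openin X U \<and> x \<in> U \<and> openin X V \<and> z \<in> V"
      then have "X closure_of U \<in> ?F" by blast
      then have "z \<in> X closure_of U" using z by blast
      then have "\<exists>y. y \<in> U \<and> y \<in> V" using uv unfolding in_closure_of by blast
      then show "U \<inter> V \<noteq> {}" by blast
    qed
    then have p: "finitely_non_hausdorff X {x,z}" using fnh_pair[OF assms zt] by simp
    have "{x,z} \<in> {A. finitely_non_hausdorff X A \<and> x \<in> A}" using p by simp
    moreover have "z \<in> {x,z}" by simp
    ultimately show "z \<in> ?S" by (rule UnionI)
  qed
  have ne: "?F \<noteq> {}" using assms by blast
  have cl: "\<forall>C\<in>?F. closedin X C" by auto
  show "closedin X ?S"
    unfolding S using closedin_Inter[OF ne] cl by blast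
  show "?S = \<Union>{A. maximal_finitely_non_hausdorff X A \<and> x \<in> A}"
  proof (intro equalityI subsetI)
    fix z assume "z \<in> ?S"
    then obtain A where A: "finitely_non_hausdorff X A" "x \<in> A" "z \<in> A" by blast
    then obtain M where M: "maximal_finitely_non_hausdorff X M" "A \<subseteq> M"
      using fnh_maximal_exists by blast
    then have "M \<in> {A. maximal_finitely_non_hausdorff X A \<and> x \<in> A}" using A by blast
    moreover have "z \<in> M" using M A by blast
    ultimately show "z \<in> \<Union>{A. maximal_finitely_non_hausdorff X A \<and> x \<in> A}" by (rule UnionI)
  next
    fix z assume "z \<in> \<Union>{A. maximal_finitely_non_hausdorff X A \<and> x \<in> A}"
    then obtain M where M: "maximal_finitely_non_hausdorff X M" "x \<in> M" "z \<in> M" by blast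
    have "finitely_non_hausdorff X M" using M(1) unfolding maximal_finitely_non_hausdorff_def by simp
    then have "M \<in> {A. finitely_non_hausdorff X A \<and> x \<in> A}" using M by simp
    then show "z \<in> ?S" using M(3) by blast
  qed
qed

end
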